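(* Let $A\subseteq\mathbb{N}$ be a sum-dominant set with $|A|=6$. Then $A-A$ contains at most $8$ distinct positive elements.
   Context: For a finite set $A\subseteq\mathbb{N}$, the sum set is $A+A=\{a_i+a_j : a_i,a_j\in A\}$ and the difference set is $A-A=\{a_i-a_j : a_i,a_j\in A\}$. The set $A$ is called sum-dominant if $|A+A|>|A-A|$. *)

theory Defs
  imports Main
begin

definition sumset :: "nat set \<Rightarrow> nat set" where
  "sumset A = {a + b | a b. a \<in> A \<and> b \<in> A}"

definition diffset :: "nat set \<Rightarrow> int set" where
  "diffset A = {int a - int b | a b. a \<in> A \<and> b \<in> A}"

definition sum_dominant :: "nat set \<Rightarrow> bool" where
  "sum_dominant A \<longleftrightarrow> finite A \<and> card (sumset A) > card (diffset A)"

end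

theory Submission
  imports Defs
begin

lemma almost_inj:
  assumes "finite T" "card T \<le> card (f ` T) + 1"
  shows "\<exists>t0. inj_on f (T - {t0})"
proof (cases "inj_on f T")
  case True then show ?thesis by (meson inj_on_diff)
next
  case False
  then obtain t1 t2 where t: "t1 \<in> T" "t2 \<in> T" "t1 \<noteq> t2" "f t1 = f t2"
    unfolding inj_on_def by blast
  have img: "f ` (T - {t1}) = f ` T" using t by blast
  have "card (T - {t1}) = card T - 1" using t assms(1) by simp
  also have "\<dots> \<le> card (f ` (T - {t1}))" using assms img by simp
  finally have "card (f ` (T - {t1})) = card (T - {t1})"
    using card_image_le[of "T - {t1}" f] assms(1) by simp
  then have "inj_on f (T - {t1})" using assms(1) by (simp add: eq_card_imp_inj_on)
  then show ?thesis by blast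
qed

lemma uniq:
  fixes f :: "nat \<times> nat \<Rightarrow> nat" and P1 P2 Q1 Q2 :: "nat \<times> nat"
  assumes inj: "inj_on f (T - {t0})"
    and T: "P1 \<in> T" "P2 \<in> T" "Q1 \<in> T" "Q2 \<in> T"
    and e: "f P1 = f P2" "f Q1 = f Q2"
    and l: "fst P1 < fst P2" "fst Q1 < fst Q2"
  shows "P1 = Q1"
proof -
  have np: "P1 \<noteq> P2" "Q1 \<noteq> Q2" using l by auto
  have a: "P1 = t0 \<or> P2 = t0" using inj T e np unfolding inj_on_def by blast
  have b: "Q1 = t0 \<or> Q2 = t0" using inj T e np unfolding inj_on_def by blast
  show ?thesis
  proof (cases "P1 = t0")
    case P: True
    show ?thesis
    proof (cases "Q1 = t0")
      case True with P show ?thesis by simp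
    next
      case False
      then have "Q2 = t0" using b by simp
      then have "Q1 = P2" using inj T e P False np unfolding inj_on_def by auto
      then show ?thesis using l P \<open>Q2 = t0\<close> by auto
    qed
  next
    case P: False
    then have P2: "P2 = t0" using a by simp
    show ?thesis
    proof (cases "Q1 = t0")
      case True
      then have "P1 = Q2" using inj T e P P2 np unfolding inj_on_def by auto
      then show ?thesis using l P2 True by auto
    next
      case False
      then have "Q2 = t0" using b by simp
      then show ?thesis using inj T e P P2 False unfolding inj_on_def by auto
    qed
  qed
qed

theorem lemma5:
  fixes A :: "nat set"
  assumes "sum_dominant A" and "card A = 6"
  shows "card {d \<in> diffset A. d > 0} \<le> 8"
proof (rule ccontr)
  assume H: "\<not> ?thesis"
  have fin: "finite A" using assms(1) unfolding sum_dominant_def by simp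
  define T where "T = {(a,b). a \<in> A \<and> b \<in> A \<and> a \<le> b}"
  define D where "D = {(x,y). x \<in> A \<and> y \<in> A \<and> y < x}"
  define f where "f = (\<lambda>p::nat\<times>nat. fst p + snd p)"
  define g where "g = (\<lambda>p::nat\<times>nat. int (fst p) - int (snd p))"
  have finT: "finite T" unfolding T_def
    by (rule finite_subset[of _ "A \<times> A"]) (auto simp: fin)
  have finD: "finite D" unfolding D_def
    by (rule finite_subset[of _ "A \<times> A"]) (auto simp: fin)
  have sumeq: "sumset A = f ` T"
  proof
    show "sumset A \<subseteq> f ` T"
    proof
      fix s assume "s \<in> sumset A"
      then obtain a b where ab: "a \<in> A" "b \<in> A" "s = a + b" unfolding sumset_def by blast
      show "s \<in> f ` T"
      proof (cases "a \<le> b")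
        case True
        then have "(a,b) \<in> T" using ab unfolding T_def by simp
        then show ?thesis using ab unfolding f_def by force
      next
        case False
        then have "(b,a) \<in> T" using ab unfolding T_def by simp
        then show ?thesis using ab unfolding f_def by force
      qed
    qed
    show "f ` T \<subseteq> sumset A" unfolding T_def f_def sumset_def by fastforce
  qed
  have diffeq: "{d \<in> diffset A. d > 0} = g ` D"
  proof
    show "{d \<in> diffset A. d > 0} \<subseteq> g ` D"
    proof
      fix d assume "d \<in> {d \<in> diffset A. d > 0}"
      then obtain a b where ab: "a \<in> A" "b \<in> A" "d = int a - int b" "d > 0"
        unfolding diffset_def by blast
      then have "(a,b) \<in> D" unfolding D_def by simp
      then show "d \<in> g ` D" using ab unfolding g_def by force
    qed
    show "g ` D \<subseteq> {d \<in> diffset A. d > 0}" unfolding D_def g_def diffset_def by fastforce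
  qed
  have finDiff: "finite (diffset A)"
  proof -
    have "diffset A = (\<lambda>p. int (fst p) - int (snd p)) ` (A \<times> A)"
      unfolding diffset_def by force
    then show ?thesis using fin by simp
  qed
  have cdiff: "card (diffset A) \<ge> 2 * card (g ` D) + 1"
  proof -
    have sub: "g ` D \<union> uminus ` (g ` D) \<union> {0} \<subseteq> diffset A"
    proof -
      have "g ` D \<subseteq> diffset A" using diffeq by blast
      moreover have "uminus ` (g ` D) \<subseteq> diffset A"
        unfolding D_def g_def diffset_def by force
      moreover have "(0::int) \<in> diffset A"
      proof -
        obtain a where "a \<in> A" using assms(2) by fastforce
        then show ?thesis unfolding diffset_def by force
      qed
      ultimately show ?thesis by blast
    qed
    have pos: "\<forall>d \<in> g ` D. d > 0" unfolding g_def D_def by auto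
    have d1: "(g ` D \<union> uminus ` (g ` D)) \<inter> {0} = {}" using pos by auto
    have d2: "g ` D \<inter> uminus ` (g ` D) = {}"
    proof (rule ccontr)
      assume "g ` D \<inter> uminus ` (g ` D) \<noteq> {}"
      then obtain d e where "d \<in> g ` D" "e \<in> g ` D" "d = - e" by blast
      then have "d > 0" "e > 0" "d = - e" using pos by blast+
      then show False by linarith
    qed
    have c1: "card (uminus ` (g ` D)) = card (g ` D)"
      by (simp add: card_image)
    have "card (g ` D \<union> uminus ` (g ` D) \<union> {0}) = 2 * card (g ` D) + 1"
      using d1 d2 c1 finD by (simp add: card_Un_disjoint)
    then show ?thesis using card_mono[OF finDiff sub] by simp
  qed
  have cards: "card T = 21 \<and> card D = 15"
  proof -
    have "A \<times> A = T \<union> D" unfolding T_def D_def by auto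
    moreover have "T \<inter> D = {}" unfolding T_def D_def by auto
    ultimately have s1: "card T + card D = 36"
      using card_Un_disjoint[OF finT finD] assms(2) card_cartesian_product[of A A] by simp
    have "T = (\<lambda>a. (a,a)) ` A \<union> prod.swap ` D" unfolding T_def D_def by force
    moreover have "(\<lambda>a. (a,a)) ` A \<inter> prod.swap ` D = {}" unfolding D_def by auto
    moreover have "card ((\<lambda>a. (a,a)) ` A) = 6" using assms(2) by (simp add: card_image inj_on_def)
    moreover have "card (prod.swap ` D) = card D" by (simp add: card_image)
    ultimately have "card T = 6 + card D" using finD fin by (simp add: card_Un_disjoint)
    then show ?thesis using s1 by simp
  qed
  have k9: "card (g ` D) \<ge> 9" using H diffeq by simp
  have sd: "card (f ` T) > card (diffset A)" using assms(1) sumeq unfolding sum_dominant_def by simp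
  have "card T \<le> card (f ` T) + 1" using sd cdiff k9 cards by linarith
  then obtain t0 where inj: "inj_on f (T - {t0})" using almost_inj[OF finT] by blast
  define B where "B = {p \<in> D. \<exists>q \<in> D. g q = g p \<and> fst q < fst p}"
  have BD: "B \<subseteq> D" unfolding B_def by blast
  have injE: "inj_on g (D - B)"
  proof (rule inj_onI)
    fix p q assume p: "p \<in> D - B" and q: "q \<in> D - B" and e: "g p = g q"
    have "\<not> fst q < fst p" using p q e unfolding B_def by auto
    moreover have "\<not> fst p < fst q" using p q e unfolding B_def by auto
    ultimately have "fst p = fst q" by simp
    then have "snd p = snd q" using e unfolding g_def by simp
    then show "p = q" using \<open>fst p = fst q\<close> by (simp add: prod_eq_iff)
  qed
  have key: "\<exists>P1 P2. P1 \<in> T \<and> P2 \<in> T \<and> f P1 = f P2 \<and> fst P1 < fst P2 \<and> snd P1 = fst p"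
    if pB: "p \<in> B" for p
  proof -
    obtain x y where p: "p = (x,y)" by (cases p)
    obtain z w where q: "(z,w) \<in> D" "g (z,w) = g (x,y)" "z < x" "(x,y) \<in> D"
      using pB p unfolding B_def by force
    have xyzw: "x \<in> A" "y \<in> A" "z \<in> A" "w \<in> A" "y < x" "w < z" "w + x = y + z"
      using q unfolding D_def g_def by auto
    then have wy: "w < y" using q(3) by linarith
    define P1 where "P1 = (w, x)"
    define P2 where "P2 = (min y z, max y z)"
    have "P1 \<in> T" "P2 \<in> T" unfolding P1_def P2_def T_def using xyzw q(3)
      by (auto simp: min_def max_def)
    moreover have "f P1 = f P2" unfolding f_def P1_def P2_def using xyzw
      by (simp add: min_def max_def)
    moreover have "fst P1 < fst P2" unfolding P1_def P2_def using xyzw wy by simp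
    moreover have "snd P1 = fst p" unfolding P1_def p by simp
    ultimately show ?thesis by blast
  qed
  have same: "fst p = fst p'" if pp: "p \<in> B" "p' \<in> B" for p p'
  proof -
    obtain P1 P2 where P: "P1 \<in> T" "P2 \<in> T" "f P1 = f P2" "fst P1 < fst P2" "snd P1 = fst p"
      using key[OF pp(1)] by blast
    obtain Q1 Q2 where Q: "Q1 \<in> T" "Q2 \<in> T" "f Q1 = f Q2" "fst Q1 < fst Q2" "snd Q1 = fst p'"
      using key[OF pp(2)] by blast
    have "P1 = Q1" using uniq[OF inj P(1,2) Q(1,2) P(3) Q(3) P(4) Q(4)] .
    then show ?thesis using P Q by simp
  qed
  have cB: "card B \<le> 5"
  proof (cases "B = {}")
    case True then show ?thesis by simp
  next
    case False
    then obtain p0 where p0: "p0 \<in> B" by blast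
    have sub: "B \<subseteq> {fst p0} \<times> (A - {fst p0})"
    proof
      fix p assume "p \<in> B"
      then have "fst p = fst p0" "p \<in> D" using same[OF _ p0] BD by blast+
      then show "p \<in> {fst p0} \<times> (A - {fst p0})" unfolding D_def by auto
    qed
    have "fst p0 \<in> A" using p0 BD unfolding D_def by auto
    then have c5: "card ({fst p0} \<times> (A - {fst p0})) = 5"
      using assms(2) fin by (simp add: card_cartesian_product)
    have "finite ({fst p0} \<times> (A - {fst p0}))" using fin by simp
    from card_mono[OF this sub] c5 show ?thesis by simp
  qed
  have "finite B" using BD finD by (rule finite_subset)
  then have "card (D - B) = card D - card B" using BD by (rule card_Diff_subset)
  then have "card (D - B) \<ge> 10" using cB cards by linarith
  moreover have "card (D - B) = card (g ` (D - B))" using injE by (simp add: card_image)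
  moreover have "card (g ` (D - B)) \<le> card (g ` D)"
    using finD by (intro card_mono) auto
  ultimately have "card (g ` D) \<ge> 10" by simp
  moreover have "card (f ` T) \<le> 21" using card_image_le[OF finT, of f] cards by simp
  ultimately show False using sd cdiff by linarith
qed

end
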